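(* Assume the following symmetry condition: for each $\beta\in R$ there is a bijection $\tau_\beta:\Sigma\to\Sigma$ with $p(y\mid\alpha)=p(\tau_\beta(y)\mid\alpha-\beta)$ for all $y\in\Sigma$, $\alpha\in R$, and, when $\Sigma$ is $\mathbb R^l$ or $\mathbb C^l$, each $\tau_\beta$ is an isometry for the Euclidean distance. Then, under LP decoding, the probability of codeword error given that codeword $c$ is transmitted is the same for every $c\in\mathcal C$.
   Context: Let $R$ be a finite ring with $q$ elements, $R^-=R\setminus\{0\}$, $\mathcal H$ an $m\times n$ matrix over $R$, $\mathcal C=\{c\in R^n:c\mathcal H^T=0\}$, $\mathcal I=\{1,\dots,n\}$, $\mathcal J=\{1,\dots,m\}$, $\mathcal I_j=\{i:\mathcal H_{j,i}\ne0\}$, $\mathcal C_j=\{b\in R^{\mathcal I_j}:\sum_{i\in\mathcal I_j}b_i\mathcal H_{j,i}=0\}$. Let $\xi:R\to\{0,1\}^{q-1}$ (coordinates indexed by $R^-$), $\xi(a)^{(\gamma)}=1$ iff $\gamma=a$; $\Xi(c)=(\xi(c_1)\mid\cdots\mid\xi(c_n))$; coordinates of $f\in\mathbb R^{(q-1)n}$ are $f_i^{(\alpha)}$. $\mathcal Q$ is the set of $(f,w)$, $w=(w_{j,b})_{j\in\mathcal J,b\in\mathcal C_j}$, with $w_{j,b}\ge0$, $\sum_{b\in\mathcal C_j}w_{j,b}=1$, and $f_i^{(\alpha)}=\sum_{b\in\mathcal C_j,b_i=\alpha}w_{j,b}$ for all $j$, $i\in\mathcal I_j$, $\alpha\in R^-$.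 A codeword $c$ is sent over a memoryless channel with input alphabet $R$, output alphabet $\Sigma$ (finite, or $\mathbb R^l$ or $\mathbb C^l$), transition probability (density) $p(y\mid a)$, so $y\in\Sigma^n$ is received with probability (density) $\prod_ip(y_i\mid c_i)$. Set $\lambda^{(\alpha)}(y)=\log(p(y\mid0)/p(y\mid\alpha))$ and let $\Lambda(y)$ have coordinates $\lambda^{(\alpha)}(y_i)$. The LP decoder minimizes $\Lambda(y)f^T$ over $(f,w)\in\mathcal Q$. A codeword error (given $c$ transmitted) is the event that $y$ lies in $B(c)=\{y\in\Sigma^n:\exists(f,w)\in\mathcal Q,\ f\ne\Xi(c),\ \Lambda(y)f^T\le\Lambda(y)\Xi(c)^T\}$. *)

theory Defs
  imports "HOL-Probability.Probability"
begin

text \<open>Parity-check matrix H : 'm => 'n => 'r (rows indexed by the finite type 'm = J,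
  columns by the finite type 'n = I). Vectors over R indexed by I are functions 'n => 'r.\<close>

definition code :: "('m::finite \<Rightarrow> 'n::finite \<Rightarrow> 'r::{ring_1,finite}) \<Rightarrow> ('n \<Rightarrow> 'r) set" where
  "code H = {c. \<forall>j. (\<Sum>i\<in>UNIV. c i * H j i) = 0}"

definition supp_row :: "('m \<Rightarrow> 'n \<Rightarrow> 'r::zero) \<Rightarrow> 'm \<Rightarrow> 'n set" where
  "supp_row H j = {i. H j i \<noteq> 0}"

text \<open>Local code C_j; an element b of R^(I_j) is represented as a function 'n => 'r
  vanishing outside I_j.\<close>
definition local_code :: "('m::finite \<Rightarrow> 'n::finite \<Rightarrow> 'r::{ring_1,finite}) \<Rightarrow> 'm \<Rightarrow> ('n \<Rightarrow> 'r) set" where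
  "local_code H j = {b. (\<forall>i. i \<notin> supp_row H j \<longrightarrow> b i = 0) \<and>
                        (\<Sum>i\<in>supp_row H j. b i * H j i) = 0}"

text \<open>The polytope Q. f i a is the coordinate f_i^(a) for a in R minus 0 (f i 0 is fixed to 0);
  w j b is w_{j,b} for b in C_j (fixed to 0 outside C_j).\<close>
definition polytope :: "('m::finite \<Rightarrow> 'n::finite \<Rightarrow> 'r::{ring_1,finite})
    \<Rightarrow> (('n \<Rightarrow> 'r \<Rightarrow> real) \<times> ('m \<Rightarrow> ('n \<Rightarrow> 'r) \<Rightarrow> real)) set" where
  "polytope H = {(f, w).
      (\<forall>i. f i 0 = 0) \<and>
      (\<forall>j b. b \<notin> local_code H j \<longrightarrow> w j b = 0) \<and>
      (\<forall>j. \<forall>b\<in>local_code H j. 0 \<le> w j b) \<and>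
      (\<forall>j. (\<Sum>b\<in>local_code H j. w j b) = 1) \<and>
      (\<forall>j. \<forall>i\<in>supp_row H j. \<forall>\<alpha>. \<alpha> \<noteq> 0 \<longrightarrow>
           f i \<alpha> = (\<Sum>b\<in>{b\<in>local_code H j. b i = \<alpha>}. w j b))}"

definition Xi :: "('n \<Rightarrow> 'r::zero) \<Rightarrow> 'n \<Rightarrow> 'r \<Rightarrow> real" where
  "Xi c = (\<lambda>i \<alpha>. if \<alpha> \<noteq> 0 \<and> c i = \<alpha> then 1 else 0)"

text \<open>Log-likelihood ratio lambda^(alpha)(y); p a y = p(y | a).\<close>
definition llr :: "('r::zero \<Rightarrow> 'y \<Rightarrow> real) \<Rightarrow> 'r \<Rightarrow> 'y \<Rightarrow> real" where
  "llr p \<alpha> y = ln (p 0 y / p \<alpha> y)"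

definition lp_cost :: "('r::{zero,finite} \<Rightarrow> 'y \<Rightarrow> real) \<Rightarrow> ('n::finite \<Rightarrow> 'y) \<Rightarrow> ('n \<Rightarrow> 'r \<Rightarrow> real) \<Rightarrow> real" where
  "lp_cost p y f = (\<Sum>i\<in>UNIV. \<Sum>\<alpha>\<in>{a. a \<noteq> 0}. llr p \<alpha> (y i) * f i \<alpha>)"

definition error_region :: "('m::finite \<Rightarrow> 'n::finite \<Rightarrow> 'r::{ring_1,finite}) \<Rightarrow> ('r \<Rightarrow> 'y \<Rightarrow> real)
    \<Rightarrow> 'y set \<Rightarrow> ('n \<Rightarrow> 'r) \<Rightarrow> ('n \<Rightarrow> 'y) set" where
  "error_region H p \<Sigma> c = {y. (\<forall>i. y i \<in> \<Sigma>) \<and>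
      (\<exists>f w. (f, w) \<in> polytope H \<and> f \<noteq> Xi c \<and> lp_cost p y f \<le> lp_cost p y (Xi c))}"

text \<open>Probability of codeword error given c transmitted: the integral over B(c) of
  prod_i p(y_i | c_i) with respect to the n-fold product of the reference measure M on Sigma
  (counting measure for finite Sigma, Lebesgue measure for R^l / C^l).\<close>
definition codeword_error_prob :: "('m::finite \<Rightarrow> 'n::finite \<Rightarrow> 'r::{ring_1,finite}) \<Rightarrow> ('r \<Rightarrow> 'y \<Rightarrow> real)
    \<Rightarrow> 'y measure \<Rightarrow> ('n \<Rightarrow> 'r) \<Rightarrow> ennreal" where
  "codeword_error_prob H p M c =
     (\<integral>\<^sup>+ y. indicator (error_region H p (space M) c) y * (\<Prod>i\<in>UNIV. ennreal (p (c i) (y i)))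
        \<partial>(PiM UNIV (\<lambda>_. M)))"

end

theory Submission
  imports Defs "HOL-Library.Function_Algebras"
begin


lemma sum_split0:
  fixes h :: "'r::{zero,finite} \<Rightarrow> 'b::comm_monoid_add"
  shows "(\<Sum>g\<in>UNIV. h g) = h 0 + (\<Sum>g\<in>{a. a \<noteq> 0}. h g)"
proof -
  have "UNIV - {0::'r} = {a. a \<noteq> 0}" by auto
  thus ?thesis using sum.remove[of "UNIV::'r set" 0 h] by simp
qed

definition FF :: "('n \<Rightarrow> 'r::{zero,finite} \<Rightarrow> real) \<Rightarrow> 'n \<Rightarrow> 'r \<Rightarrow> real" where
  "FF f i g = (if g = 0 then 1 - (\<Sum>a\<in>{a. a \<noteq> 0}. f i a) else f i g)"

lemma sum_FF:
  fixes f :: "'n \<Rightarrow> 'r::{zero,finite} \<Rightarrow> real"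
  shows "(\<Sum>g\<in>UNIV. FF f i g) = 1"
proof -
  have "(\<Sum>g\<in>UNIV. FF f i g) = FF f i 0 + (\<Sum>g\<in>{a. a \<noteq> 0}. FF f i g)"
    by (rule sum_split0)
  also have "(\<Sum>g\<in>{a. a \<noteq> 0}. FF f i g) = (\<Sum>g\<in>{a. a \<noteq> 0}. f i g)"
    by (rule sum.cong) (auto simp: FF_def)
  finally show ?thesis by (simp add: FF_def)
qed

lemma llr_0[simp]: "llr p 0 y = 0"
  by (simp add: llr_def)

lemma cost_FF:
  fixes f :: "'n::finite \<Rightarrow> 'r::{ring_1,finite} \<Rightarrow> real"
  assumes "L 0 = 0"
  shows "(\<Sum>\<alpha>\<in>{a. a \<noteq> 0}. L \<alpha> * f i \<alpha>) = (\<Sum>g\<in>UNIV. L g * FF f i g)"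
proof -
  have "(\<Sum>g\<in>UNIV. L g * FF f i g) = L 0 * FF f i 0 + (\<Sum>g\<in>{a. a \<noteq> 0}. L g * FF f i g)"
    by (rule sum_split0)
  also have "(\<Sum>g\<in>{a. a \<noteq> 0}. L g * FF f i g) = (\<Sum>g\<in>{a. a \<noteq> 0}. L g * f i g)"
    by (rule sum.cong) (auto simp: FF_def)
  finally show ?thesis using assms by simp
qed

definition Phi :: "('n \<Rightarrow> 'r::{ring_1,finite}) \<Rightarrow> ('n \<Rightarrow> 'r \<Rightarrow> real) \<Rightarrow> 'n \<Rightarrow> 'r \<Rightarrow> real" where
  "Phi d f i a = (if a = 0 then 0 else FF f i (a + d i))"

lemma sum_shift:
  fixes h :: "'r::{ring_1,finite} \<Rightarrow> real"
  shows "(\<Sum>a\<in>UNIV. h (a + t)) = (\<Sum>a\<in>UNIV. h a)"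
proof -
  have "bij (\<lambda>a. a + t)" by (rule bijI') (auto intro: exI[of _ "_ - t"])
  thus ?thesis by (rule sum.reindex_bij_betw)
qed

lemma cost_Phi:
  fixes f :: "'n::finite \<Rightarrow> 'r::{ring_1,finite} \<Rightarrow> real"
  assumes L: "\<forall>i \<alpha>. llr p \<alpha> (y' i) = llr p (\<alpha> + d i) (y i) - llr p (d i) (y i)"
  shows "lp_cost p y' (Phi d f) = lp_cost p y f - (\<Sum>i\<in>UNIV. llr p (d i) (y i))"
proof -
  have "(\<Sum>\<alpha>\<in>{a. a \<noteq> 0}. llr p \<alpha> (y' i) * Phi d f i \<alpha>) =
        (\<Sum>\<alpha>\<in>{a. a \<noteq> 0}. llr p \<alpha> (y i) * f i \<alpha>) - llr p (d i) (y i)" for i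
  proof -
    let ?G = "\<lambda>g. (llr p g (y i) - llr p (d i) (y i)) * FF f i g"
    have "(\<Sum>\<alpha>\<in>{a. a \<noteq> 0}. llr p \<alpha> (y' i) * Phi d f i \<alpha>) = (\<Sum>\<alpha>\<in>{a. a \<noteq> 0}. ?G (\<alpha> + d i))"
      by (rule sum.cong) (auto simp: Phi_def L)
    also have "\<dots> = (\<Sum>\<alpha>\<in>UNIV. ?G (\<alpha> + d i))"
    proof -
      have "(\<Sum>\<alpha>\<in>UNIV. ?G (\<alpha> + d i)) = ?G (0 + d i) + (\<Sum>\<alpha>\<in>{a. a \<noteq> 0}. ?G (\<alpha> + d i))"
        by (rule sum_split0)
      thus ?thesis by simp
    qed
    also have "\<dots> = (\<Sum>g\<in>UNIV. ?G g)" by (rule sum_shift)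
    also have "\<dots> = (\<Sum>g\<in>UNIV. llr p g (y i) * FF f i g) - llr p (d i) (y i) * (\<Sum>g\<in>UNIV. FF f i g)"
      by (simp add: algebra_simps sum_subtractf sum_distrib_left sum_distrib_right)
    also have "\<dots> = (\<Sum>\<alpha>\<in>{a. a \<noteq> 0}. llr p \<alpha> (y i) * f i \<alpha>) - llr p (d i) (y i)"
      by (simp add: sum_FF cost_FF[where L="\<lambda>g. llr p g (y i)"])
    finally show ?thesis .
  qed
  thus ?thesis by (simp add: lp_cost_def sum_subtractf)
qed

lemma Phi_Xi: "Phi d (Xi c) = Xi (c - d)"
proof (intro ext)
  fix i a
  have "FF (Xi c) i g = (if c i = g then 1 else 0)" for g
  proof (cases "g = 0")
    case True
    have "(\<Sum>a\<in>{a. a \<noteq> 0}. Xi c i a) = (if c i \<noteq> 0 then 1 else 0)"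
      unfolding Xi_def
      by (simp add: sum.delta' [of "{a. a \<noteq> 0}"] if_distrib cong: if_cong)
    thus ?thesis using True by (simp add: FF_def)
  qed (auto simp: FF_def Xi_def)
  thus "Phi d (Xi c) i a = Xi (c - d) i a"
    by (auto simp: Phi_def Xi_def algebra_simps)
qed

lemma Phi_inj:
  fixes f g :: "'n \<Rightarrow> 'r::{ring_1,finite} \<Rightarrow> real"
  assumes f0: "\<forall>i. f i 0 = 0" and g0: "\<forall>i. g i 0 = 0" and eq: "Phi d f = Phi d g"
  shows "f = g"
proof (intro ext)
  fix i a
  have ne: "FF f i x = FF g i x" if "x \<noteq> d i" for x
  proof -
    have "x - d i \<noteq> 0" using that by simp
    hence "Phi d f i (x - d i) = FF f i x" "Phi d g i (x - d i) = FF g i x"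
      by (simp_all add: Phi_def)
    thus ?thesis using eq by simp
  qed
  have split: "(\<Sum>x\<in>UNIV. FF h i x) = FF h i (d i) + (\<Sum>x\<in>UNIV - {d i}. FF h i x)"
    for h :: "'n \<Rightarrow> 'r \<Rightarrow> real"
    by (rule sum.remove) auto
  have "(\<Sum>x\<in>UNIV - {d i}. FF f i x) = (\<Sum>x\<in>UNIV - {d i}. FF g i x)"
    by (rule sum.cong) (auto intro: ne)
  hence "FF f i (d i) = FF g i (d i)"
    using split[of f] split[of g] sum_FF[of f i] sum_FF[of g i] by simp
  hence all: "FF f i x = FF g i x" for x using ne by (cases "x = d i") auto
  show "f i a = g i a"
  proof (cases "a = 0")
    case True thus ?thesis using f0 g0 by simp
  next
    case False thus ?thesis using all[of a] by (simp add: FF_def)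
  qed
qed

definition dj :: "('m \<Rightarrow> 'n \<Rightarrow> 'r::zero) \<Rightarrow> ('n \<Rightarrow> 'r) \<Rightarrow> 'm \<Rightarrow> 'n \<Rightarrow> 'r" where
  "dj H d j = (\<lambda>i. if i \<in> supp_row H j then d i else 0)"

lemma dj_local:
  fixes H :: "'m::finite \<Rightarrow> 'n::finite \<Rightarrow> 'r::{ring_1,finite}"
  assumes "d \<in> code H"
  shows "dj H d j \<in> local_code H j"
proof -
  have "(\<Sum>i\<in>UNIV. d i * H j i) = 0" using assms by (simp add: code_def)
  moreover have "(\<Sum>i\<in>UNIV. d i * H j i) = (\<Sum>i\<in>supp_row H j. d i * H j i)"
    by (rule sum.mono_neutral_right) (auto simp: supp_row_def)
  ultimately show ?thesis
    by (auto simp: local_code_def dj_def)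
qed

lemma local_add:
  fixes H :: "'m::finite \<Rightarrow> 'n::finite \<Rightarrow> 'r::{ring_1,finite}"
  assumes "a \<in> local_code H j" "b \<in> local_code H j"
  shows "a + b \<in> local_code H j" "a - b \<in> local_code H j"
  using assms by (auto simp: local_code_def distrib_right left_diff_distrib sum.distrib sum_subtractf)

lemma bij_local:
  fixes H :: "'m::finite \<Rightarrow> 'n::finite \<Rightarrow> 'r::{ring_1,finite}"
  assumes "t \<in> local_code H j"
  shows "bij_betw (\<lambda>b. b + t) (local_code H j) (local_code H j)"
proof (rule bij_betw_imageI)
  show "inj_on (\<lambda>b. b + t) (local_code H j)" by (auto intro: inj_onI)
  show "(\<lambda>b. b + t) ` local_code H j = local_code H j"
  proof
    show "(\<lambda>b. b + t) ` local_code H j \<subseteq> local_code H j" using assms local_add by blast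
    show "local_code H j \<subseteq> (\<lambda>b. b + t) ` local_code H j"
    proof
      fix b assume "b \<in> local_code H j"
      hence "b - t \<in> local_code H j" using assms local_add by blast
      thus "b \<in> (\<lambda>b. b + t) ` local_code H j" by (intro image_eqI[of _ _ "b - t"]) auto
    qed
  qed
qed

lemma fiber_sum:
  fixes H :: "'m::finite \<Rightarrow> 'n::finite \<Rightarrow> 'r::{ring_1,finite}"
  assumes fw: "(f, w) \<in> polytope H" and i: "i \<in> supp_row H j"
  shows "FF f i g = (\<Sum>b\<in>{b\<in>local_code H j. b i = g}. w j b)"
proof (cases "g = 0")
  case False thus ?thesis using fw i by (auto simp: polytope_def FF_def)
next
  case True
  have "(\<Sum>a\<in>UNIV. (\<Sum>b\<in>{b\<in>local_code H j. b i = a}. w j b)) = (\<Sum>b\<in>local_code H j. w j b)"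
    by (rule sum.group) auto
  also have "\<dots> = 1" using fw by (simp add: polytope_def)
  finally have "(\<Sum>b\<in>{b\<in>local_code H j. b i = 0}. w j b) + (\<Sum>a\<in>{a. a \<noteq> 0}. (\<Sum>b\<in>{b\<in>local_code H j. b i = a}. w j b)) = 1"
    by (simp add: sum_split0)
  moreover have "(\<Sum>a\<in>{a. a \<noteq> 0}. (\<Sum>b\<in>{b\<in>local_code H j. b i = a}. w j b)) = (\<Sum>a\<in>{a. a \<noteq> 0}. f i a)"
    using fw i by (intro sum.cong) (auto simp: polytope_def)
  ultimately show ?thesis using True by (simp add: FF_def)
qed

lemma Phi_polytope:
  fixes H :: "'m::finite \<Rightarrow> 'n::finite \<Rightarrow> 'r::{ring_1,finite}"
  assumes d: "d \<in> code H" and fw: "(f, w) \<in> polytope H"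
  shows "(Phi d f, \<lambda>j b. if b \<in> local_code H j then w j (b + dj H d j) else 0) \<in> polytope H"
proof -
  let ?w = "\<lambda>j b. if b \<in> local_code H j then w j (b + dj H d j) else 0"
  have bj: "bij_betw (\<lambda>b. b + dj H d j) (local_code H j) (local_code H j)" for j
    by (rule bij_local[OF dj_local[OF d]])
  have mem: "b + dj H d j \<in> local_code H j" if "b \<in> local_code H j" for b j
    using bj[of j] that by (auto simp: bij_betw_def)
  have nn: "\<forall>j. \<forall>b\<in>local_code H j. 0 \<le> ?w j b"
    using fw mem by (auto simp: polytope_def)
  have s1: "(\<Sum>b\<in>local_code H j. ?w j b) = 1" for j
  proof -
    have "(\<Sum>b\<in>local_code H j. ?w j b) = (\<Sum>b\<in>local_code H j. w j (b + dj H d j))"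
      by (rule sum.cong) auto
    also have "\<dots> = (\<Sum>b\<in>local_code H j. w j b)"
      by (rule sum.reindex_bij_betw[OF bj[of j], of "w j"])
    also have "\<dots> = 1" using fw by (simp add: polytope_def)
    finally show ?thesis .
  qed
  have fc: "Phi d f i a = (\<Sum>b\<in>{b\<in>local_code H j. b i = a}. ?w j b)"
    if i: "i \<in> supp_row H j" and a: "a \<noteq> 0" for i j a
  proof -
    have bj2: "bij_betw (\<lambda>b. b + dj H d j) {b\<in>local_code H j. b i = a} {b\<in>local_code H j. b i = a + d i}"
    proof (rule bij_betw_imageI)
      show "inj_on (\<lambda>b. b + dj H d j) {b\<in>local_code H j. b i = a}" by (auto intro: inj_onI)
      have di: "dj H d j i = d i" using i by (simp add: dj_def)
      show "(\<lambda>b. b + dj H d j) ` {b\<in>local_code H j. b i = a} = {b\<in>local_code H j. b i = a + d i}"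
      proof
        show "(\<lambda>b. b + dj H d j) ` {b\<in>local_code H j. b i = a} \<subseteq> {b\<in>local_code H j. b i = a + d i}"
          using mem di by auto
        show "{b\<in>local_code H j. b i = a + d i} \<subseteq> (\<lambda>b. b + dj H d j) ` {b\<in>local_code H j. b i = a}"
        proof
          fix b assume b: "b \<in> {b\<in>local_code H j. b i = a + d i}"
          hence "b - dj H d j \<in> local_code H j" using local_add(2) dj_local[OF d] by blast
          moreover have "(b - dj H d j) i = a" using b di by simp
          ultimately show "b \<in> (\<lambda>b. b + dj H d j) ` {b\<in>local_code H j. b i = a}"
            by (intro image_eqI[of _ _ "b - dj H d j"]) auto
        qed
      qed
    qed
    have "(\<Sum>b\<in>{b\<in>local_code H j. b i = a}. ?w j b) = (\<Sum>b\<in>{b\<in>local_code H j. b i = a}. w j (b + dj H d j))"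
      by (rule sum.cong) auto
    also have "\<dots> = (\<Sum>b\<in>{b\<in>local_code H j. b i = a + d i}. w j b)"
      by (rule sum.reindex_bij_betw[OF bj2, of "w j"])
    also have "\<dots> = FF f i (a + d i)" using fiber_sum[OF fw i] by simp
    finally show ?thesis using a by (simp add: Phi_def)
  qed
  show ?thesis unfolding polytope_def
    using nn s1 fc by (auto simp: Phi_def)
qed

lemma shift:
  fixes H :: "'m::finite \<Rightarrow> 'n::finite \<Rightarrow> 'r::{ring_1,finite}"
  assumes d: "d \<in> code H"
    and L: "\<forall>i \<alpha>. llr p \<alpha> (y' i) = llr p (\<alpha> + d i) (y i) - llr p (d i) (y i)"
    and fw: "(f, w) \<in> polytope H" and ne: "f \<noteq> Xi c"
    and le: "lp_cost p y f \<le> lp_cost p y (Xi c)"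
  shows "\<exists>f' w'. (f', w') \<in> polytope H \<and> f' \<noteq> Xi (c - d) \<and> lp_cost p y' f' \<le> lp_cost p y' (Xi (c - d))"
proof (intro exI conjI)
  show "(Phi d f, \<lambda>j b. if b \<in> local_code H j then w j (b + dj H d j) else 0) \<in> polytope H"
    by (rule Phi_polytope[OF d fw])
  show "Phi d f \<noteq> Xi (c - d)"
  proof
    assume "Phi d f = Xi (c - d)"
    hence "Phi d f = Phi d (Xi c)" by (simp add: Phi_Xi)
    moreover have "\<forall>i. f i 0 = 0" using fw by (simp add: polytope_def)
    moreover have "\<forall>i. Xi c i 0 = 0" by (simp add: Xi_def)
    ultimately have "f = Xi c" using Phi_inj by blast
    thus False using ne by simp
  qed
  show "lp_cost p y' (Phi d f) \<le> lp_cost p y' (Xi (c - d))"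
    using le cost_Phi[OF L, of f] cost_Phi[OF L, of "Xi c"] by (simp add: Phi_Xi)
qed

lemma region_shift:
  fixes H :: "'m::finite \<Rightarrow> 'n::finite \<Rightarrow> 'r::{ring_1,finite}"
  assumes d: "d \<in> code H"
    and L: "\<forall>i \<alpha>. llr p \<alpha> (y' i) = llr p (\<alpha> + d i) (y i) - llr p (d i) (y i)"
    and y': "\<forall>i. y' i \<in> S"
    and y: "y \<in> error_region H p S c"
  shows "y' \<in> error_region H p S (c - d)"
  using y y' shift[OF d L] unfolding error_region_def by blast



lemma iso_continuous:
  fixes s :: "'a::metric_space \<Rightarrow> 'a"
  assumes iso: "\<forall>x y. dist (s x) (s y) = dist x y"
  shows "continuous_on UNIV s"
  unfolding continuous_on_iff using iso by (metis UNIV_I)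

lemma iso_image_ball:
  fixes s :: "'a::metric_space \<Rightarrow> 'a"
  assumes "surj s" and iso: "\<forall>x y. dist (s x) (s y) = dist x y"
  shows "s ` ball x r = ball (s x) r"
proof
  show "s ` ball x r \<subseteq> ball (s x) r"
  proof
    fix z assume "z \<in> s ` ball x r"
    then obtain w where "w \<in> ball x r" "z = s w" by blast
    thus "z \<in> ball (s x) r" using iso by simp
  qed
  show "ball (s x) r \<subseteq> s ` ball x r"
  proof
    fix z assume z: "z \<in> ball (s x) r"
    obtain w where w: "z = s w" using assms(1) by (metis surjD)
    hence "dist x w < r" using z iso by simp
    thus "z \<in> s ` ball x r" using w by auto
  qed
qed

lemma cov_aux:
  fixes U :: "'a::euclidean_space set"
  assumes U: "open U" and x: "x \<in> U" and d: "0 < d"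
  shows "\<exists>i. i \<in> {(x, r::real). 0 < r \<and> ball x r \<subseteq> U} \<and> x \<in> ball (fst i) (snd i) \<and> snd i < d"
proof -
  obtain e where e: "e > 0" "ball x e \<subseteq> U" using U x unfolding open_contains_ball by blast
  show ?thesis
    using e d by (intro exI[of _ "(x, min e (d/2))"]) auto
qed

lemma iso_open_measure:
  fixes s :: "'a::euclidean_space \<Rightarrow> 'a"
  assumes b: "bij s" and iso: "\<forall>x y. dist (s x) (s y) = dist x y" and U: "open U"
  shows "emeasure lebesgue (s ` U) = emeasure lebesgue U"
proof -
  define K where "K = {(x, r::real). 0 < r \<and> ball x r \<subseteq> U}"
  have cov: "\<exists>i. i \<in> K \<and> x \<in> ball (fst i) (snd i) \<and> snd i < d" if "x \<in> U" "0 < d" for x d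
    unfolding K_def by (rule cov_aux[OF U that])
  obtain C where C: "countable C" "C \<subseteq> K"
    and pw: "pairwise (\<lambda>i j. disjnt (ball (fst i) (snd i)) (ball (fst j) (snd j))) C"
    and neg: "negligible (U - (\<Union>i\<in>C. ball (fst i) (snd i)))"
    using Vitali_covering_theorem_balls[of U K fst snd] cov by blast
  define B where "B i = ball (fst i) (snd i)" for i :: "'a \<times> real"
  define N where "N = U - (\<Union>i\<in>C. B i)"
  have BU: "B i \<subseteq> U" if "i \<in> C" for i
  proof -
    from that C(2) have "i \<in> K" by blast
    thus ?thesis by (cases i) (simp add: K_def B_def)
  qed
  have Ueq: "U = (\<Union>i\<in>C. B i) \<union> N" using BU by (auto simp: N_def)
  have disj: "disjoint_family_on B C"
    using pw unfolding disjoint_family_on_def pairwise_def disjnt_def B_def by blast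
  have Nnull: "N \<in> null_sets lebesgue" using neg by (simp add: N_def B_def negligible_iff_null_sets)
  have sN: "negligible (s ` N)"
  proof (rule negligible_locally_Lipschitz_image)
    show "negligible N" using neg by (simp add: N_def B_def)
    show "\<exists>T B. open T \<and> x \<in> T \<and> (\<forall>y\<in>N \<inter> T. norm (s y - s x) \<le> B * norm (y - x))" for x
    proof (intro exI[of _ UNIV] exI[of _ 1] conjI ballI)
      fix y assume "y \<in> N \<inter> UNIV"
      have "norm (s y - s x) = norm (y - x)" using iso by (metis dist_norm)
      thus "norm (s y - s x) \<le> 1 * norm (y - x)" by simp
    qed auto
  qed simp
  have "open (\<Union>i\<in>C. B i)" by (auto simp: B_def)
  hence Bopen: "(\<Union>i\<in>C. B i) \<in> sets lebesgue" using borel_open sets_completionI_sets sets_lborel by metis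
  have Bs': "ball x r \<in> sets lebesgue" for x r
    using borel_open[OF open_ball] sets_completionI_sets sets_lborel by metis
  have Bs: "B i \<in> sets lebesgue" for i unfolding B_def by (rule Bs')
  have sB: "s ` B i = ball (s (fst i)) (snd i)" for i
    unfolding B_def by (rule iso_image_ball[OF bij_is_surj[OF b] iso])
  have "s ` U = (\<Union>i\<in>C. s ` B i) \<union> s ` N" by (subst Ueq) (simp only: image_Un image_UN)
  hence sUeq: "s ` U = (\<Union>i\<in>C. ball (s (fst i)) (snd i)) \<union> s ` N" by (simp only: sB)
  have disj2: "disjoint_family_on (\<lambda>i. ball (s (fst i)) (snd i)) C"
    unfolding disjoint_family_on_def
  proof (intro ballI impI)
    fix i j assume ij: "i \<in> C" "j \<in> C" "i \<noteq> j"
    have "B i \<inter> B j = {}" using disj ij unfolding disjoint_family_on_def by blast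
    hence "s ` B i \<inter> s ` B j = {}" using image_Int[OF bij_is_inj[OF b], of "B i" "B j"] by simp
    thus "ball (s (fst i)) (snd i) \<inter> ball (s (fst j)) (snd j) = {}" by (simp only: sB)
  qed
  have "emeasure lebesgue U = emeasure lebesgue (\<Union>i\<in>C. B i)"
    using Ueq emeasure_Un_null_set[OF Bopen Nnull] by simp
  also have "\<dots> = (\<integral>\<^sup>+i. emeasure lebesgue (B i) \<partial>count_space C)"
    by (rule emeasure_UN_countable[OF Bs C(1) disj])
  also have "\<dots> = (\<integral>\<^sup>+i. emeasure lebesgue (ball (s (fst i)) (snd i)) \<partial>count_space C)"
  proof (rule nn_integral_cong)
    fix i assume "i \<in> space (count_space C)"
    hence "i \<in> K" using C(2) by auto
    hence r: "snd i \<ge> 0" by (cases i) (simp add: K_def)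
    show "emeasure lebesgue (B i) = emeasure lebesgue (ball (s (fst i)) (snd i))"
      unfolding B_def using emeasure_lebesgue_ball_conv_unit_ball[OF r] by metis
  qed
  also have "\<dots> = emeasure lebesgue (\<Union>i\<in>C. ball (s (fst i)) (snd i))"
    by (rule emeasure_UN_countable[symmetric, OF Bs' C(1) disj2])
  also have "\<dots> = emeasure lebesgue (s ` U)"
  proof -
    have o: "open (\<Union>i\<in>C. ball (s (fst i)) (snd i))" by auto
    have sBo: "(\<Union>i\<in>C. ball (s (fst i)) (snd i)) \<in> sets lebesgue"
      using borel_open[OF o] sets_completionI_sets sets_lborel by metis
    have sNn: "s ` N \<in> null_sets lebesgue" using sN by (simp add: negligible_iff_null_sets)
    show ?thesis by (simp only: sUeq emeasure_Un_null_set[OF sBo sNn])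
  qed
  finally show ?thesis by simp
qed

lemma lborel_iso:
  fixes t :: "'a::euclidean_space \<Rightarrow> 'a"
  assumes b: "bij t" and iso: "\<forall>x y. dist (t x) (t y) = dist x y"
  shows "distr lborel lborel t = lborel"
proof -
  have tm: "t \<in> measurable lborel lborel"
    using borel_measurable_continuous_onI[OF iso_continuous[OF iso]] by simp
  have bi: "bij (inv t)" using b by (simp add: bij_imp_bij_inv)
  have isoi: "\<forall>x y. dist (inv t x) (inv t y) = dist x y"
  proof (intro allI)
    fix x y
    have "dist (inv t x) (inv t y) = dist (t (inv t x)) (t (inv t y))" using iso by metis
    also have "\<dots> = dist x y" using b by (simp add: bij_is_surj surj_f_inv_f)
    finally show "dist (inv t x) (inv t y) = dist x y" .
  qed
  have "lborel = distr lborel lborel t"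
  proof (rule lborel_eqI)
    fix l u :: 'a assume lu: "\<And>b. b \<in> Basis \<Longrightarrow> l \<bullet> b \<le> u \<bullet> b"
    have eq: "t -` box l u = inv t ` box l u" by (rule bij_vimage_eq_inv_image[OF b])
    have ob: "open (t -` box l u)"
      using continuous_open_vimage[OF open_box, of t l u] iso_continuous[OF iso]
      by (simp add: continuous_on_eq_continuous_at)
    have "emeasure (distr lborel lborel t) (box l u) = emeasure lborel (t -` box l u)"
      using tm by (subst emeasure_distr) auto
    also have "\<dots> = emeasure lebesgue (t -` box l u)"
      using ob by simp
    also have "\<dots> = emeasure lebesgue (box l u)"
      unfolding eq by (rule iso_open_measure[OF bi isoi open_box])
    also have "\<dots> = emeasure lborel (box l u)" by simp
    finally show "emeasure (distr lborel lborel t) (box l u) = (\<Prod>b\<in>Basis. (u - l) \<bullet> b)"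
      using lu by (simp add: emeasure_lborel_box_eq)
  qed simp
  thus ?thesis by simp
qed



lemma nn_integral_transfer_le:
  assumes T: "T \<in> measurable N N" and S: "S \<in> measurable N N"
    and ST: "\<And>x. x \<in> space N \<Longrightarrow> S (T x) = x"
    and TS: "\<And>x. x \<in> space N \<Longrightarrow> T (S x) = x"
    and D: "distr N N T = N"
  shows "(\<integral>\<^sup>+x. f (T x) \<partial>N) \<le> (\<integral>\<^sup>+x. f x \<partial>N)"
proof -
  have "integral\<^sup>S N g \<le> (\<integral>\<^sup>+x. f x \<partial>N)"
    if g: "simple_function N g" "g \<le> (\<lambda>x. f (T x))" for g
  proof -
    define h where "h x = (if x \<in> space N then g (S x) else 0)" for x
    have gm: "g \<in> borel_measurable N" using g(1) by (rule borel_measurable_simple_function)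
    have gS: "(\<lambda>x. g (S x)) \<in> borel_measurable N" using measurable_compose[OF S gm] .
    have hm: "h \<in> borel_measurable N"
      using measurable_cong[of N h "\<lambda>x. g (S x)"] gS by (simp add: h_def)
    have "h ` space N \<subseteq> g ` space N"
      using measurable_space[OF S] by (auto simp: h_def)
    hence "finite (h ` space N)"
      using simple_functionD(1)[OF g(1)] finite_subset by blast
    hence hs: "simple_function N h" using hm by (simp add: simple_function_iff_borel_measurable)
    have hf: "h x \<le> f x" if "x \<in> space N" for x
    proof -
      have "g (S x) \<le> f (T (S x))" using le_funD[OF g(2)] by simp
      thus ?thesis using that TS by (simp add: h_def)
    qed
    have "integral\<^sup>S N g = integral\<^sup>N N g" by (rule nn_integral_eq_simple_integral[OF g(1), symmetric])
    also have "\<dots> = (\<integral>\<^sup>+x. h (T x) \<partial>N)"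
      by (rule nn_integral_cong) (simp add: h_def measurable_space[OF T] ST)
    also have "\<dots> = integral\<^sup>N (distr N N T) h"
      by (rule nn_integral_distr[symmetric]) (use T hm D in auto)
    also have "\<dots> = integral\<^sup>N N h" using D by simp
    also have "\<dots> \<le> (\<integral>\<^sup>+x. f x \<partial>N)" by (rule nn_integral_mono) (rule hf)
    finally show ?thesis .
  qed
  moreover have "(\<integral>\<^sup>+x. f (T x) \<partial>N) = (SUP g\<in>{g. simple_function N g \<and> g \<le> (\<lambda>x. f (T x))}. integral\<^sup>S N g)"
    by (rule nn_integral_def)
  ultimately show ?thesis by (auto intro!: SUP_least)
qed

lemma nn_integral_transfer:
  assumes T: "T \<in> measurable N N" and S: "S \<in> measurable N N"
    and ST: "\<And>x. x \<in> space N \<Longrightarrow> S (T x) = x"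
    and TS: "\<And>x. x \<in> space N \<Longrightarrow> T (S x) = x"
    and D: "distr N N T = N"
  shows "(\<integral>\<^sup>+x. f (T x) \<partial>N) = (\<integral>\<^sup>+x. f x \<partial>N)"
proof (rule antisym)
  show "(\<integral>\<^sup>+x. f (T x) \<partial>N) \<le> (\<integral>\<^sup>+x. f x \<partial>N)" by (rule nn_integral_transfer_le[OF T S ST TS D])
  have DS: "distr N N S = N"
  proof -
    have "distr N N S = distr (distr N N T) N S" using D by simp
    also have "\<dots> = distr N N (S \<circ> T)" by (rule distr_distr[OF S T])
    also have "\<dots> = distr N N (\<lambda>x. x)" by (rule distr_cong) (simp_all add: ST)
    finally show ?thesis by simp
  qed
  have "(\<integral>\<^sup>+x. f (T (S x)) \<partial>N) \<le> (\<integral>\<^sup>+x. f (T x) \<partial>N)"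
    by (rule nn_integral_transfer_le[OF S T TS ST DS])
  moreover have "(\<integral>\<^sup>+x. f (T (S x)) \<partial>N) = (\<integral>\<^sup>+x. f x \<partial>N)"
    by (rule nn_integral_cong) (simp add: TS)
  ultimately show "(\<integral>\<^sup>+x. f x \<partial>N) \<le> (\<integral>\<^sup>+x. f (T x) \<partial>N)" by simp
qed

lemma space_PiM_UNIV: "space (PiM (UNIV::'n set) (\<lambda>_. M)) = {y. \<forall>i. y i \<in> space M}"
  by (auto simp: space_PiM PiE_iff)

lemma PiM_shift_meas:
  fixes M :: "'y measure" and t :: "'n::finite \<Rightarrow> 'y \<Rightarrow> 'y"
  assumes tm: "\<And>i. t i \<in> measurable M M"
  shows "(\<lambda>y i. t i (y i)) \<in> measurable (PiM UNIV (\<lambda>_. M)) (PiM UNIV (\<lambda>_. M))"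
proof (rule measurable_PiM_single')
  show "(\<lambda>y. t i (y i)) \<in> measurable (PiM UNIV (\<lambda>_. M)) M" for i
    using measurable_compose[OF measurable_component_singleton[of i UNIV "\<lambda>_. M"] tm[of i]] by simp
  show "(\<lambda>y i. t i (y i)) \<in> space (PiM UNIV (\<lambda>_. M)) \<rightarrow> (\<Pi>\<^sub>E i\<in>UNIV. space M)"
    using measurable_space[OF tm] by (auto simp: space_PiM PiE_iff)
qed

lemma PiM_shift:
  fixes M :: "'y measure" and t :: "'n::finite \<Rightarrow> 'y \<Rightarrow> 'y"
  assumes sf: "sigma_finite_measure M" and tm: "\<And>i. t i \<in> measurable M M"
    and td: "\<And>i. distr M M (t i) = M"
  shows "distr (PiM UNIV (\<lambda>_. M)) (PiM UNIV (\<lambda>_. M)) (\<lambda>y i. t i (y i)) = PiM UNIV (\<lambda>_. M)"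
proof -
  interpret product_sigma_finite "\<lambda>_::'n. M" using sf by (simp add: product_sigma_finite_def)
  have Tm: "(\<lambda>y i. t i (y i)) \<in> measurable (PiM UNIV (\<lambda>_. M)) (PiM UNIV (\<lambda>_. M))"
    by (rule PiM_shift_meas[OF tm])
  show ?thesis
  proof (rule PiM_eqI)
    fix A :: "'n \<Rightarrow> 'y set" assume A: "\<And>i. i \<in> UNIV \<Longrightarrow> A i \<in> sets M"
    have pre: "(\<lambda>y i. t i (y i)) -` (\<Pi>\<^sub>E i\<in>UNIV. A i) \<inter> space (PiM UNIV (\<lambda>_. M))
             = (\<Pi>\<^sub>E i\<in>UNIV. t i -` A i \<inter> space M)"
      by (auto simp: space_PiM PiE_iff)
    have "emeasure (distr (PiM UNIV (\<lambda>_. M)) (PiM UNIV (\<lambda>_. M)) (\<lambda>y i. t i (y i))) (\<Pi>\<^sub>E i\<in>UNIV. A i)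
        = emeasure (PiM UNIV (\<lambda>_. M)) (\<Pi>\<^sub>E i\<in>UNIV. t i -` A i \<inter> space M)"
      using A by (subst emeasure_distr[OF Tm]) (auto intro!: sets_PiM_I_finite simp: pre)
    also have "\<dots> = (\<Prod>i\<in>UNIV. emeasure M (t i -` A i \<inter> space M))"
      using A by (intro emeasure_PiM) (auto intro!: measurable_sets[OF tm])
    also have "\<dots> = (\<Prod>i\<in>UNIV. emeasure M (A i))"
    proof (rule prod.cong)
      fix i
      have "emeasure (distr M M (t i)) (A i) = emeasure M (t i -` A i \<inter> space M)"
        using A by (intro emeasure_distr[OF tm]) auto
      thus "emeasure M (t i -` A i \<inter> space M) = emeasure M (A i)" using td by simp
    qed simp
    finally show "emeasure (distr (PiM UNIV (\<lambda>_. M)) (PiM UNIV (\<lambda>_. M)) (\<lambda>y i. t i (y i))) (\<Pi>\<^sub>E i\<in>UNIV. A i)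
        = (\<Prod>i\<in>UNIV. emeasure M (A i))" .
  qed simp_all
qed


lemma llr_shift:
  fixes p :: "'r::{ring_1,finite} \<Rightarrow> 'y \<Rightarrow> real"
  assumes pos: "\<forall>a. 0 < p a y" "\<forall>a. 0 < p a z"
    and sym: "\<forall>a. p a y = p (a - b) z"
  shows "llr p \<alpha> z = llr p (\<alpha> + b) y - llr p b y"
proof -
  have z0: "p 0 z = p b y" using sym[rule_format, of b] by simp
  have za: "p \<alpha> z = p (\<alpha> + b) y" using sym[rule_format, of "\<alpha> + b"] by simp
  have a: "0 < p 0 y" "0 < p b y" "0 < p (\<alpha> + b) y" using pos by auto
  have "llr p \<alpha> z = ln (p b y) - ln (p (\<alpha> + b) y)"
    unfolding llr_def z0 za using a by (simp add: ln_div)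
  moreover have "llr p (\<alpha> + b) y = ln (p 0 y) - ln (p (\<alpha> + b) y)"
    unfolding llr_def using a by (simp add: ln_div)
  moreover have "llr p b y = ln (p 0 y) - ln (p b y)"
    unfolding llr_def using a by (simp add: ln_div)
  ultimately show ?thesis by simp
qed

lemma main_generic:
  fixes H :: "'m::finite \<Rightarrow> 'n::finite \<Rightarrow> 'r::{ring_1,finite}"
    and M :: "'y measure"
    and p :: "'r \<Rightarrow> 'y \<Rightarrow> real"
    and \<tau> :: "'r \<Rightarrow> 'y \<Rightarrow> 'y"
  assumes sf: "sigma_finite_measure M"
    and tm: "\<And>b. \<tau> b \<in> measurable M M"
    and sm: "\<And>b. inv_into (space M) (\<tau> b) \<in> measurable M M"
    and td: "\<And>b. distr M M (\<tau> b) = M"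
    and p_pos: "\<forall>a. \<forall>y\<in>space M. 0 < p a y"
    and tau_bij: "\<forall>\<beta>. bij_betw (\<tau> \<beta>) (space M) (space M)"
    and symmetric: "\<forall>\<beta> \<alpha>. \<forall>y\<in>space M. p \<alpha> y = p (\<alpha> - \<beta>) (\<tau> \<beta> y)"
    and c: "c \<in> code H"
  shows "codeword_error_prob H p M c = codeword_error_prob H p M 0"
proof -
  define N where "N = PiM (UNIV::'n set) (\<lambda>_. M)"
  define \<sigma> where "\<sigma> b = inv_into (space M) (\<tau> b)" for b
  define T where "T y = (\<lambda>i. \<tau> (c i) (y i))" for y :: "'n \<Rightarrow> 'y"
  define S where "S y = (\<lambda>i. \<sigma> (c i) (y i))" for y :: "'n \<Rightarrow> 'y"
  have spN: "space N = {y. \<forall>i. y i \<in> space M}" unfolding N_def by (rule space_PiM_UNIV)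
  have \<tau>sp: "\<tau> b x \<in> space M" if "x \<in> space M" for b x
    using tau_bij that by (meson bij_betwE)
  have \<sigma>sp: "\<sigma> b x \<in> space M" if "x \<in> space M" for b x
    using tau_bij that unfolding \<sigma>_def by (meson bij_betwE bij_betw_inv_into)
  have st: "\<sigma> b (\<tau> b x) = x" if "x \<in> space M" for b x
    using tau_bij that unfolding \<sigma>_def by (meson bij_betw_inv_into_left)
  have ts: "\<tau> b (\<sigma> b x) = x" if "x \<in> space M" for b x
    using tau_bij that unfolding \<sigma>_def by (meson bij_betw_inv_into_right)
  have Tm: "T \<in> measurable N N" unfolding T_def N_def by (rule PiM_shift_meas) (rule tm)
  have Sm: "S \<in> measurable N N" unfolding S_def N_def \<sigma>_def by (rule PiM_shift_meas) (rule sm)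
  have ST: "S (T y) = y" if "y \<in> space N" for y
    using that by (auto simp: S_def T_def spN st)
  have TS: "T (S y) = y" if "y \<in> space N" for y
    using that by (auto simp: S_def T_def spN ts)
  have D: "distr N N T = N" unfolding T_def N_def by (rule PiM_shift[OF sf tm td])
  have mc: "- c \<in> code H"
  proof -
    have "(\<Sum>i\<in>UNIV. (- c) i * H j i) = - (\<Sum>i\<in>UNIV. c i * H j i)" for j
      by (simp add: sum_negf)
    thus ?thesis using c by (simp add: code_def)
  qed
  have equiv: "y \<in> error_region H p (space M) c \<longleftrightarrow> T y \<in> error_region H p (space M) 0"
    if y: "y \<in> space N" for y
  proof -
    have ysp: "\<forall>i. y i \<in> space M" using y spN by simp
    have Tsp: "\<forall>i. T y i \<in> space M" using ysp \<tau>sp by (simp add: T_def)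
    have L1: "llr p \<alpha> (T y i) = llr p (\<alpha> + c i) (y i) - llr p (c i) (y i)" for i \<alpha>
    proof (rule llr_shift)
      show "\<forall>a. 0 < p a (y i)" "\<forall>a. 0 < p a (T y i)" using p_pos ysp Tsp by auto
      show "\<forall>a. p a (y i) = p (a - c i) (T y i)" using symmetric ysp by (simp add: T_def)
    qed
    have L2: "llr p \<alpha> (y i) = llr p (\<alpha> + (- c) i) (T y i) - llr p ((- c) i) (T y i)" for i \<alpha>
      using L1[of "\<alpha> - c i" i] L1[of "- c i" i] by simp
    show ?thesis
    proof
      assume "y \<in> error_region H p (space M) c"
      from region_shift[OF c _ Tsp this] L1 show "T y \<in> error_region H p (space M) 0" by simp
    next
      assume "T y \<in> error_region H p (space M) 0"
      from region_shift[OF mc _ ysp this] L2 show "y \<in> error_region H p (space M) c" by simp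
    qed
  qed
  define g where "g z = indicator (error_region H p (space M) 0) z * (\<Prod>i\<in>UNIV. ennreal (p 0 (z i)))"
    for z :: "'n \<Rightarrow> 'y"
  have "codeword_error_prob H p M c = (\<integral>\<^sup>+y. g (T y) \<partial>N)"
    unfolding codeword_error_prob_def N_def[symmetric]
  proof (rule nn_integral_cong)
    fix y assume y: "y \<in> space N"
    have ysp: "\<forall>i. y i \<in> space M" using y spN by simp
    have "p (c i) (y i) = p 0 (T y i)" for i
    proof -
      have "p (c i) (y i) = p (c i - c i) (\<tau> (c i) (y i))" using symmetric ysp by blast
      thus ?thesis by (simp add: T_def)
    qed
    thus "indicator (error_region H p (space M) c) y * (\<Prod>i\<in>UNIV. ennreal (p (c i) (y i))) = g (T y)"
      unfolding g_def using equiv[OF y] by (simp add: indicator_def)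
  qed
  also have "\<dots> = (\<integral>\<^sup>+y. g y \<partial>N)" by (rule nn_integral_transfer[OF Tm Sm ST TS D])
  also have "\<dots> = codeword_error_prob H p M 0"
    unfolding codeword_error_prob_def N_def g_def by simp
  finally show ?thesis .
qed

theorem theorem1:
  fixes H :: "'m::finite \<Rightarrow> 'n::finite \<Rightarrow> 'r::{ring_1,finite}"
    and M :: "'y::euclidean_space measure"
    and p :: "'r \<Rightarrow> 'y \<Rightarrow> real"
    and \<tau> :: "'r \<Rightarrow> 'y \<Rightarrow> 'y"
    and c c' :: "'n \<Rightarrow> 'r"
  assumes alphabet: "(finite (space M) \<and> M = count_space (space M)) \<or>
                     (M = lborel \<and> (\<forall>\<beta> x y. dist (\<tau> \<beta> x) (\<tau> \<beta> y) = dist x y))"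
    and p_pos: "\<forall>a. \<forall>y\<in>space M. 0 < p a y"
    and p_meas: "\<forall>a. p a \<in> borel_measurable M"
    and p_prob: "\<forall>a. (\<integral>\<^sup>+ y. ennreal (p a y) \<partial>M) = 1"
    and tau_bij: "\<forall>\<beta>. bij_betw (\<tau> \<beta>) (space M) (space M)"
    and symmetric: "\<forall>\<beta> \<alpha>. \<forall>y\<in>space M. p \<alpha> y = p (\<alpha> - \<beta>) (\<tau> \<beta> y)"
    and c: "c \<in> code H" and c': "c' \<in> code H"
  shows "codeword_error_prob H p M c = codeword_error_prob H p M c'"
proof -
  have props: "sigma_finite_measure M \<and> (\<forall>b. \<tau> b \<in> measurable M M) \<and>
      (\<forall>b. inv_into (space M) (\<tau> b) \<in> measurable M M) \<and> (\<forall>b. distr M M (\<tau> b) = M)"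
    using alphabet
  proof
    assume A: "finite (space M) \<and> M = count_space (space M)"
    define X where "X = space M"
    have MX: "M = count_space X" using A by (simp add: X_def)
    have fX: "finite X" using A by (simp add: X_def)
    have bX: "bij_betw (\<tau> b) X X" for b using tau_bij by (simp add: X_def)
    have "bij_betw (inv_into X (\<tau> b)) X X" for b by (rule bij_betw_inv_into[OF bX])
    moreover have "sigma_finite_measure (count_space X)"
      using fX by (intro sigma_finite_measure_count_space_countable) (simp add: countable_finite)
    ultimately show ?thesis
      unfolding MX using bX bij_betwE[OF bX] bij_betwE[OF bij_betw_inv_into[OF bX]]
      by (auto simp: distr_bij_count_space)
  next
    assume A: "M = lborel \<and> (\<forall>\<beta> x y. dist (\<tau> \<beta> x) (\<tau> \<beta> y) = dist x y)"
    hence M: "M = lborel" and iso: "\<And>b. \<forall>x y. dist (\<tau> b x) (\<tau> b y) = dist x y" by auto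
    have bb: "bij (\<tau> b)" for b using tau_bij M by simp
    have isoi: "\<forall>x y. dist (inv (\<tau> b) x) (inv (\<tau> b) y) = dist x y" for b
    proof (intro allI)
      fix x y
      have "dist (inv (\<tau> b) x) (inv (\<tau> b) y) = dist (\<tau> b (inv (\<tau> b) x)) (\<tau> b (inv (\<tau> b) y))"
        using iso by metis
      also have "\<dots> = dist x y" using bb by (simp add: bij_is_surj surj_f_inv_f)
      finally show "dist (inv (\<tau> b) x) (inv (\<tau> b) y) = dist x y" .
    qed
    show ?thesis unfolding M
      using borel_measurable_continuous_onI[OF iso_continuous[OF iso]]
        borel_measurable_continuous_onI[OF iso_continuous[OF isoi]]
        lborel_iso[OF bb iso] sigma_finite_lborel
      by auto
  qed
  have "codeword_error_prob H p M c = codeword_error_prob H p M 0"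
    using props by (intro main_generic[OF _ _ _ _ p_pos tau_bij symmetric c]) auto
  moreover have "codeword_error_prob H p M c' = codeword_error_prob H p M 0"
    using props by (intro main_generic[OF _ _ _ _ p_pos tau_bij symmetric c']) auto
  ultimately show ?thesis by simp
qed

end
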